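(* Let $F:\{0,1\}^n\to\mathbb{F}^E_m\cap[0,1]$ be a finite-precision CDF over a binary number format $\mathcal{B}=(n,\gamma_{\mathcal{B}},\phi_{\mathcal{B}})$. Then the procedure $\textsc{Opt}(F)$ described in the context halts almost surely, returns a string $X\in\{0,1\}^n$ with $\Pr(X\le_{\mathcal{B}}x)=F(x)$ for every $x\in\{0,1\}^n$, and is entropy-optimal: its expected number of fair random bits drawn equals the minimum expected entropy cost over all random variate generators with the same output distribution.
   Context: $\overline{\mathbb{R}}=\mathbb{R}\cup\{-\infty,+\infty,\bot\}$ is totally ordered by $-\infty<$ reals $<+\infty<\bot$. A binary number format $\mathcal{B}=(n,\gamma_{\mathcal{B}},\phi_{\mathcal{B}})$ consists of $n\ge1$, $\gamma_{\mathcal{B}}:\{0,1\}^n\to\overline{\mathbb{R}}$, and a bijection $\phi_{\mathcal{B}}$ of $\{0,1\}^n$ with $b<_{\mathrm{dict}}b'\Rightarrow\gamma_{\mathcal{B}}(\phi_{\mathcal{B}}(b))\le\gamma_{\mathcal{B}}(\phi_{\mathcal{B}}(b'))$; it induces the order $b<_{\mathcal{B}}b'$ iff $\phi_{\mathcal{B}}^{-1}(b)<_{\mathrm{dict}}\phi_{\mathcal{B}}^{-1}(b')$. $\mathbb{F}^E_m\cap[0,1]$ is the set of reals in $[0,1]$ representable as floating-point numbers with $E$ exponent and $m$ mantissa bits. A finite-precision CDF over $\mathcal{B}$ is $F:\{0,1\}^n\to\mathbb{F}^E_m\cap[0,1]$ with $F(\phi_{\mathcal{B}}(1^n))=1$ and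 $b<_{\mathcal{B}}b'\Rightarrow F(b)\le F(b')$. For $z\in[0,1]$ with concise binary expansion $(z_0.z_1z_2\ldots)_2$ (not ending in infinitely many 1s) write $[z]_j=z_j$. $\textsc{Opt}(F,b,\ell,f_0,f_1)$, called initially as $\textsc{Opt}(F,\varepsilon,0,0,1)$: if $|b|=n$ return $\phi_{\mathcal{B}}(b)$. Let $f_2=F(\phi_{\mathcal{B}}(b\,0\,1^{n-|b|-1}))$. If $f_2=f_1$ return $\textsc{Opt}(F,b0,\ell,f_0,f_2)$; if $f_2=f_0$ return $\textsc{Opt}(F,b1,\ell,f_2,f_1)$. Let $a_0(j)=[f_2-f_0]_j$ and $a_1(j)=[f_1-f_2]_j$ (exact real differences). If $\ell>0$: if $a_0(\ell)=1$ and $a_1(\ell)=0$ return $\textsc{Opt}(F,b0,\ell,f_0,f_2)$; if $a_0(\ell)=0$ and $a_1(\ell)=1$ return $\textsc{Opt}(F,b1,\ell,f_2,f_1)$. Then repeat: draw a fair random bit $x$, set $\ell\leftarrow\ell+1$; if $x=0$ and $a_0(\ell)=1$ return $\textsc{Opt}(F,b0,\ell,f_0,f_2)$; if $x=1$ and $a_1(\ell)=1$ return $\textsc{Opt}(F,b1,\ell,f_2,f_1)$. A random variate generator for a distribution $q$ on $\{0,1\}^n$ is a partial map $Y:\{0,1\}^*\rightharpoonup\{0,1\}^n$ with prefix-free domain, $\sum_{u\in\mathrm{dom}(Y)}2^{-|u|}=1$ and $\sum_{u}2^{-|u|}\mathbf{1}[Y(u)=s]=q(s)$; its expected entropy cost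 is $\sum_{u\in\mathrm{dom}(Y)}|u|2^{-|u|}$. *)

theory Defs
  imports "HOL-Analysis.Analysis" "HOL-Library.Sublist"
begin

datatype xreal = MInf | Fin real | PInf | Bot

fun xrank :: "xreal \<Rightarrow> nat" where
  "xrank MInf = 0" | "xrank (Fin _) = 1" | "xrank PInf = 2" | "xrank Bot = 3"

definition xle :: "xreal \<Rightarrow> xreal \<Rightarrow> bool" where
  "xle a b = (case (a, b) of (Fin x, Fin y) \<Rightarrow> x \<le> y | _ \<Rightarrow> xrank a \<le> xrank b)"

text \<open>Bit strings are bool lists (False = 0, True = 1); the strings of length n.\<close>
definition strs :: "nat \<Rightarrow> bool list set" where
  "strs n = {b. length b = n}"

abbreviation dict_less :: "bool list \<Rightarrow> bool list \<Rightarrow> bool" where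
  "dict_less b b' \<equiv> ord_class.lexordp b b'"

definition binary_number_format ::
  "nat \<Rightarrow> (bool list \<Rightarrow> xreal) \<Rightarrow> (bool list \<Rightarrow> bool list) \<Rightarrow> bool" where
  "binary_number_format n \<gamma> \<phi> \<longleftrightarrow> n \<ge> 1 \<and> bij_betw \<phi> (strs n) (strs n) \<and>
     (\<forall>b\<in>strs n. \<forall>b'\<in>strs n. dict_less b b' \<longrightarrow> xle (\<gamma> (\<phi> b)) (\<gamma> (\<phi> b')))"

definition B_less :: "nat \<Rightarrow> (bool list \<Rightarrow> bool list) \<Rightarrow> bool list \<Rightarrow> bool list \<Rightarrow> bool" where
  "B_less n \<phi> b b' \<longleftrightarrow> dict_less (inv_into (strs n) \<phi> b) (inv_into (strs n) \<phi> b')"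

definition B_le :: "nat \<Rightarrow> (bool list \<Rightarrow> bool list) \<Rightarrow> bool list \<Rightarrow> bool list \<Rightarrow> bool" where
  "B_le n \<phi> b b' \<longleftrightarrow> b = b' \<or> B_less n \<phi> b b'"

text \<open>IEEE-754 style: bias 2^(E-1)-1; zero, subnormals k/2^m * 2^(1-bias) and normals
  (1 + k/2^m) * 2^(e-bias) for 1 <= e <= 2^E - 2, k < 2^m, with either sign
  (the all-ones exponent is reserved for infinities/NaN).\<close>
definition float_set :: "nat \<Rightarrow> nat \<Rightarrow> real set" where
  "float_set E m =
     (let bias = (2::int) ^ (E - 1) - 1 in
       {s * (real k / 2 ^ m) * 2 powr (real_of_int (1 - bias)) | s k. s \<in> {-1, 1} \<and> k < 2 ^ m} \<union>
       {s * (1 + real k / 2 ^ m) * 2 powr (real_of_int (int e - bias)) | s k e.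
          s \<in> {-1, 1} \<and> k < 2 ^ m \<and> 1 \<le> e \<and> e \<le> 2 ^ E - 2})"

definition fp_cdf ::
  "nat \<Rightarrow> nat \<Rightarrow> nat \<Rightarrow> (bool list \<Rightarrow> bool list) \<Rightarrow> (bool list \<Rightarrow> real) \<Rightarrow> bool" where
  "fp_cdf E m n \<phi> F \<longleftrightarrow>
     (\<forall>b\<in>strs n. F b \<in> float_set E m \<inter> {0..1}) \<and>
     F (\<phi> (replicate n True)) = 1 \<and>
     (\<forall>b\<in>strs n. \<forall>b'\<in>strs n. B_less n \<phi> b b' \<longrightarrow> F b \<le> F b')"

text \<open>[z]_j for z in [0,1] (concise expansion, not ending in infinitely many 1s).\<close>
definition bdig :: "real \<Rightarrow> nat \<Rightarrow> bool" where
  "bdig z j \<longleftrightarrow> \<lfloor>z * 2 ^ j\<rfloor> mod 2 = 1"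

text \<open>The repeat loop: given a0 = f2 - f0, a1 = f1 - f2, current l and the remaining
  input bits, returns the chosen branch (False = b0, True = b1), the new l and the
  unread bits; None if the input bits run out first.\<close>
partial_function (option) opt_loop ::
  "real \<Rightarrow> real \<Rightarrow> nat \<Rightarrow> bool list \<Rightarrow> (bool \<times> nat \<times> bool list) option" where
  "opt_loop a0 a1 l u =
    (if u = [] then None
     else if \<not> hd u \<and> bdig a0 (l + 1) then Some (False, l + 1, tl u)
     else if hd u \<and> bdig a1 (l + 1) then Some (True, l + 1, tl u)
     else opt_loop a0 a1 (l + 1) (tl u))"

definition split_val ::
  "nat \<Rightarrow> (bool list \<Rightarrow> bool list) \<Rightarrow> (bool list \<Rightarrow> real) \<Rightarrow> bool list \<Rightarrow> real" where
  "split_val n \<phi> F b = F (\<phi> (b @ [False] @ replicate (n - length b - 1) True))"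

text \<open>opt n phi F b l f0 f1 u: runs Opt(F,b,l,f0,f1) reading random bits from u.
  Returns Some (output, unread bits) if it halts before running out of bits.\<close>
declare [[unify_search_bound = 400]]
partial_function (option) opt ::
  "nat \<Rightarrow> (bool list \<Rightarrow> bool list) \<Rightarrow> (bool list \<Rightarrow> real) \<Rightarrow> bool list \<Rightarrow> nat \<Rightarrow> real \<Rightarrow> real
   \<Rightarrow> bool list \<Rightarrow> (bool list \<times> bool list) option" where
  "opt n \<phi> F b l f0 f1 u =
    (if length b = n then Some (\<phi> b, u)
     else if split_val n \<phi> F b = f1 then opt n \<phi> F (b @ [False]) l f0 (split_val n \<phi> F b) u
     else if split_val n \<phi> F b = f0 then opt n \<phi> F (b @ [True]) l (split_val n \<phi> F b) f1 u
     else if l > 0 \<and> bdig (split_val n \<phi> F b - f0) l \<and> \<not> bdig (f1 - split_val n \<phi> F b) l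
       then opt n \<phi> F (b @ [False]) l f0 (split_val n \<phi> F b) u
     else if l > 0 \<and> \<not> bdig (split_val n \<phi> F b - f0) l \<and> bdig (f1 - split_val n \<phi> F b) l
       then opt n \<phi> F (b @ [True]) l (split_val n \<phi> F b) f1 u
     else
       Option.bind (opt_loop (split_val n \<phi> F b - f0) (f1 - split_val n \<phi> F b) l u)
         (\<lambda>r. if fst r then opt n \<phi> F (b @ [True]) (fst (snd r)) (split_val n \<phi> F b) f1 (snd (snd r))
              else opt n \<phi> F (b @ [False]) (fst (snd r)) f0 (split_val n \<phi> F b) (snd (snd r))))"

declare [[unify_search_bound = 60]]

text \<open>The random variate generator realised by Opt(F) = Opt(F, eps, 0, 0, 1):
  it maps an input bit string u to the output iff Opt halts after reading exactly u.\<close>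
definition opt_gen ::
  "nat \<Rightarrow> (bool list \<Rightarrow> bool list) \<Rightarrow> (bool list \<Rightarrow> real) \<Rightarrow> bool list \<Rightarrow> bool list option" where
  "opt_gen n \<phi> F u = (case opt n \<phi> F [] 0 0 1 u of Some (x, []) \<Rightarrow> Some x | _ \<Rightarrow> None)"

definition gen_dist :: "(bool list \<Rightarrow> bool list option) \<Rightarrow> bool list \<Rightarrow> ennreal" where
  "gen_dist Y s = (\<Sum>\<^sub>\<infinity> u \<in> {u. Y u = Some s}. ennreal ((1/2) ^ length u))"

definition is_generator :: "nat \<Rightarrow> (bool list \<Rightarrow> bool list option) \<Rightarrow> (bool list \<Rightarrow> ennreal) \<Rightarrow> bool" where
  "is_generator n Y q \<longleftrightarrow>
     (\<forall>u\<in>dom Y. \<forall>v\<in>dom Y. prefix u v \<longrightarrow> u = v) \<and>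
     ran Y \<subseteq> strs n \<and>
     (\<Sum>\<^sub>\<infinity> u \<in> dom Y. ennreal ((1/2) ^ length u)) = 1 \<and>
     (\<forall>s. gen_dist Y s = q s)"

definition entropy_cost :: "(bool list \<Rightarrow> bool list option) \<Rightarrow> ennreal" where
  "entropy_cost Y = (\<Sum>\<^sub>\<infinity> u \<in> dom Y. ennreal (real (length u) * (1/2) ^ length u))"

end

theory Submission
  imports Defs
begin

lemma floor_double: "\<lfloor>(t::real) * 2 ^ Suc m\<rfloor> = 2 * \<lfloor>t * 2 ^ m\<rfloor> + \<lfloor>t * 2 ^ Suc m\<rfloor> mod 2"
proof -
  have e: "t * 2 ^ Suc m = 2 * (t * 2 ^ m)" by simp
  define q where "q = \<lfloor>t * 2 ^ m\<rfloor>"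
  have "q \<le> t * 2 ^ m" "t * 2 ^ m < q + 1" unfolding q_def by linarith+
  hence "2*q \<le> \<lfloor>t * 2 ^ Suc m\<rfloor>" "\<lfloor>t * 2 ^ Suc m\<rfloor> \<le> 2*q + 1"
    unfolding e by linarith+
  thus ?thesis unfolding q_def[symmetric] by presburger
qed

lemma bdig_Suc: "of_bool (bdig t (Suc m)) = \<lfloor>(t::real) * 2 ^ Suc m\<rfloor> - 2 * \<lfloor>t * 2 ^ m\<rfloor>"
  using floor_double[of t m] unfolding bdig_def by (smt (verit) of_bool_eq(1) of_bool_eq(2) pos_mod_bound pos_mod_sign)

lemma carry_sum:
  fixes x y z :: "nat \<Rightarrow> bool" and car :: "nat \<Rightarrow> nat" and \<alpha>0 \<alpha>1 \<beta> :: "nat \<Rightarrow> nat"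
  assumes c0: "car 0 = of_bool (z 0)" and x0: "\<not> x 0" and y0: "\<not> y 0"
    and rel: "\<And>m. int (car (Suc m)) + of_bool (x (Suc m)) + of_bool (y (Suc m)) = of_bool (z (Suc m)) + 2 * int (car m)"
    and cb: "\<And>m. car m \<le> 1"
    and bk: "\<beta> k = 0"
    and brec: "\<And>m. m < k \<Longrightarrow> \<beta> m = (if x (Suc m) then \<alpha>0 (Suc m) else \<beta> (Suc m)) + (if y (Suc m) then \<alpha>1 (Suc m) else \<beta> (Suc m))"
  shows "(\<Sum>L\<le>k. if z L then (if 0 < L \<and> x L \<and> \<not> y L then \<alpha>0 L else if 0 < L \<and> \<not> x L \<and> y L then \<alpha>1 L else \<beta> L) else 0)
       = (\<Sum>L\<le>k. if x L then \<alpha>0 L else 0) + (\<Sum>L\<le>k. if y L then \<alpha>1 L else 0)"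
proof -
  let ?V = "\<lambda>L. if z L then (if 0 < L \<and> x L \<and> \<not> y L then \<alpha>0 L else if 0 < L \<and> \<not> x L \<and> y L then \<alpha>1 L else \<beta> L) else 0"
  have inv: "m \<le> k \<Longrightarrow> (\<Sum>L\<le>m. ?V L) = car m * \<beta> m + (\<Sum>L\<le>m. if x L then \<alpha>0 L else 0) + (\<Sum>L\<le>m. if y L then \<alpha>1 L else 0)" for m
  proof (induction m)
    case 0
    then show ?case using c0 x0 y0 by simp
  next
    case (Suc m)
    hence IH: "(\<Sum>L\<le>m. ?V L) = car m * \<beta> m + (\<Sum>L\<le>m. if x L then \<alpha>0 L else 0) + (\<Sum>L\<le>m. if y L then \<alpha>1 L else 0)" by simp
    have b: "\<beta> m = (if x (Suc m) then \<alpha>0 (Suc m) else \<beta> (Suc m)) + (if y (Suc m) then \<alpha>1 (Suc m) else \<beta> (Suc m))"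
      using Suc.prems brec by simp
    have r: "int (car (Suc m)) + of_bool (x (Suc m)) + of_bool (y (Suc m)) = of_bool (z (Suc m)) + 2 * int (car m)" by (rule rel)
    have cm: "car m = 0 \<or> car m = 1" using cb[of m] by auto
    have cs: "car (Suc m) = 0 \<or> car (Suc m) = 1" using cb[of "Suc m"] by auto
    show ?case
      unfolding sum.atMost_Suc IH b
      using r cm cs by (cases "x (Suc m)"; cases "y (Suc m)"; cases "z (Suc m)"; auto)
  qed
  show ?thesis using inv[of k] bk by simp
qed

lemma card_Suc_list:
  "card {w::bool list. length w = Suc j \<and> P w} = card {w. length w = j \<and> P (False # w)} + card {w. length w = j \<and> P (True # w)}"
proof -
  have fin: "finite {w::bool list. length w = j \<and> Q w}" for Q
    by (rule finite_subset[OF _ finite_lists_length_eq[of "UNIV::bool set" j]]) auto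
  have eq: "{w::bool list. length w = Suc j \<and> P w} = Cons False ` {w. length w = j \<and> P (False # w)} \<union> Cons True ` {w. length w = j \<and> P (True # w)}"
  proof (rule set_eqI, rule iffI)
    fix w assume "w \<in> {w::bool list. length w = Suc j \<and> P w}"
    then obtain a v where "w = a # v" "length v = j" "P (a # v)" by (cases w) auto
    then show "w \<in> Cons False ` {w. length w = j \<and> P (False # w)} \<union> Cons True ` {w. length w = j \<and> P (True # w)}"
      by (cases a) auto
  qed auto
  show ?thesis unfolding eq
    by (subst card_Un_disjoint) (auto simp: fin card_image)
qed

locale S =
  fixes n :: nat and \<phi> :: "bool list \<Rightarrow> bool list" and F :: "bool list \<Rightarrow> real"
  assumes bij: "bij_betw \<phi> (strs n) (strs n)"
    and Frng: "\<And>b. b \<in> strs n \<Longrightarrow> 0 \<le> F b \<and> F b \<le> 1"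
    and Ftop: "F (\<phi> (replicate n True)) = 1"
    and Fmono: "\<And>c c'. c \<in> strs n \<Longrightarrow> c' \<in> strs n \<Longrightarrow> ord_class.lexordp c c' \<Longrightarrow> F (\<phi> c) \<le> F (\<phi> c')"
begin

definition hi :: "bool list \<Rightarrow> real" where
  "hi b = F (\<phi> (b @ replicate (n - length b) True))"

definition lo :: "bool list \<Rightarrow> real" where
  "lo b = (if True \<in> set b then hi (rev (tl (dropWhile Not (rev b))) @ [False]) else 0)"

definition sg :: "bool list \<Rightarrow> real" where
  "sg b = hi b - lo b"

lemma phi_strs: "c \<in> strs n \<Longrightarrow> \<phi> c \<in> strs n"
  by (rule bij_betw_apply[OF bij])

lemma F_phi_rng: "length c = n \<Longrightarrow> 0 \<le> F (\<phi> c) \<and> F (\<phi> c) \<le> 1"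
  using Frng phi_strs by (simp add: strs_def)

lemma hi_Nil[simp]: "hi [] = 1" unfolding hi_def using Ftop by simp
lemma lo_Nil[simp]: "lo [] = 0" unfolding lo_def by simp
lemma lo_False[simp]: "lo (b @ [False]) = lo b" unfolding lo_def by simp
lemma lo_True[simp]: "lo (b @ [True]) = hi (b @ [False])" unfolding lo_def by simp
lemma hi_True: "length b < n \<Longrightarrow> hi (b @ [True]) = hi b"
proof -
  assume a: "length b < n"
  hence "n - length b = Suc (n - Suc (length b))" by simp
  thus ?thesis unfolding hi_def by simp
qed

lemma split_hi: "length b < n \<Longrightarrow> split_val n \<phi> F b = hi (b @ [False])"
  unfolding hi_def split_val_def by simp

lemma hi_rng: "length b \<le> n \<Longrightarrow> 0 \<le> hi b \<and> hi b \<le> 1"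
  unfolding hi_def by (rule F_phi_rng) simp

lemma lexordp_FT: "ord_class.lexordp (b @ False # x) (b @ True # y)"
  by (rule ord_class.lexordp_append_left_rightI) simp

lemma lo_le_compl: "length b \<le> n \<Longrightarrow> length (b @ e) = n \<Longrightarrow> lo b \<le> F (\<phi> (b @ e))"
proof (induction b arbitrary: e rule: rev_induct)
  case Nil
  then show ?case using F_phi_rng by simp
next
  case (snoc x b)
  show ?case
  proof (cases x)
    case True
    have "lo (b @ [x]) = F (\<phi> (b @ False # replicate (n - Suc (length b)) True))"
      using True by (simp add: hi_def)
    also have "\<dots> \<le> F (\<phi> (b @ True # e))"
      using snoc.prems by (intro Fmono) (auto simp: strs_def lexordp_FT)
    finally show ?thesis using True by simp
  next
    case False
    then show ?thesis using snoc.IH[of "False # e"] snoc.prems by simp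
  qed
qed

lemma lo_le_hi: "length b \<le> n \<Longrightarrow> lo b \<le> hi b"
  unfolding hi_def by (rule lo_le_compl) auto

lemma lo_nonneg: "length b \<le> n \<Longrightarrow> 0 \<le> lo b"
proof (induction b rule: rev_induct)
  case (snoc x b)
  then show ?case using hi_rng[of "b @ [False]"] by (cases x) auto
qed simp

lemma lo_le_mid: "length b < n \<Longrightarrow> lo b \<le> hi (b @ [False])"
  using lo_le_hi[of "b @ [False]"] by simp

lemma mid_le_hi: "length b < n \<Longrightarrow> hi (b @ [False]) \<le> hi b"
  using lo_le_hi[of "b @ [True]"] hi_True by simp

lemma sub_mono: "length (b @ e) \<le> n \<Longrightarrow> lo b \<le> lo (b @ e) \<and> hi (b @ e) \<le> hi b"
proof (induction e rule: rev_induct)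
  case Nil
  then show ?case by simp
next
  case (snoc x e)
  hence IH: "lo b \<le> lo (b @ e) \<and> hi (b @ e) \<le> hi b" by simp
  have l: "length (b @ e) < n" using snoc.prems by simp
  have e1: "b @ e @ [x] = (b @ e) @ [x]" by simp
  have "lo b \<le> lo ((b @ e) @ [x]) \<and> hi ((b @ e) @ [x]) \<le> hi b"
  proof (cases x)
    case True
    have "lo ((b @ e) @ [True]) = hi ((b @ e) @ [False])" by (rule lo_True)
    then show ?thesis using True IH lo_le_mid[OF l] hi_True[OF l] by simp
  next
    case False
    have "lo ((b @ e) @ [False]) = lo (b @ e)" by (rule lo_False)
    then show ?thesis using False IH mid_le_hi[OF l] by simp
  qed
  then show ?case by simp
qed

end

context S begin

lemma opt_full: "length b = n \<Longrightarrow> opt n \<phi> F b l f0 f1 u = Some (\<phi> b, u)"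
  by (subst opt.simps) simp

lemma opt_step: "length b < n \<Longrightarrow> opt n \<phi> F b l f0 f1 u =
    (if hi (b @ [False]) = f1 then opt n \<phi> F (b @ [False]) l f0 (hi (b @ [False])) u
     else if hi (b @ [False]) = f0 then opt n \<phi> F (b @ [True]) l (hi (b @ [False])) f1 u
     else if l > 0 \<and> bdig (hi (b @ [False]) - f0) l \<and> \<not> bdig (f1 - hi (b @ [False])) l
       then opt n \<phi> F (b @ [False]) l f0 (hi (b @ [False])) u
     else if l > 0 \<and> \<not> bdig (hi (b @ [False]) - f0) l \<and> bdig (f1 - hi (b @ [False])) l
       then opt n \<phi> F (b @ [True]) l (hi (b @ [False])) f1 u
     else
       Option.bind (opt_loop (hi (b @ [False]) - f0) (f1 - hi (b @ [False])) l u)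
         (\<lambda>r. if fst r then opt n \<phi> F (b @ [True]) (fst (snd r)) (hi (b @ [False])) f1 (snd (snd r))
              else opt n \<phi> F (b @ [False]) (fst (snd r)) f0 (hi (b @ [False])) (snd (snd r))))"
proof -
  assume lb: "length b < n"
  show ?thesis
    apply (subst opt.simps)
    apply (simp only: split_hi[OF lb])
    using lb by simp
qed

lemma loop_frame: "opt_loop a0 a1 l u = Some (x, l', r) \<Longrightarrow> opt_loop a0 a1 l (u @ t) = Some (x, l', r @ t)"
proof (induction u arbitrary: l)
  case Nil
  then show ?case by (simp add: opt_loop.simps)
next
  case (Cons a u)
  show ?case
    using Cons.prems Cons.IH[of "l + 1"]
    by (subst opt_loop.simps) (subst (asm) opt_loop.simps, auto split: if_splits)
qed

lemma opt_frame: "length b \<le> n \<Longrightarrow> opt n \<phi> F b l f0 f1 u = Some (x, r) \<Longrightarrow>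
   opt n \<phi> F b l f0 f1 (u @ t) = Some (x, r @ t) \<and> x \<in> strs n"
proof (induction "n - length b" arbitrary: b l f0 f1 u x r)
  case 0
  hence "length b = n" by simp
  then show ?case using 0 opt_full phi_strs by (auto simp: strs_def)
next
  case (Suc k)
  hence lb: "length b < n" by simp
  have IH: "\<And>y l f0 f1 u x r. opt n \<phi> F (b @ [y]) l f0 f1 u = Some (x, r) \<Longrightarrow>
     opt n \<phi> F (b @ [y]) l f0 f1 (u @ t) = Some (x, r @ t) \<and> x \<in> strs n"
    using Suc.hyps(1)[of "b @ [_]"] Suc.hyps(2) lb by simp
  show ?case
  proof (cases "hi (b @ [False]) = f1 \<or> hi (b @ [False]) = f0 \<or>
       (l > 0 \<and> bdig (hi (b @ [False]) - f0) l \<and> \<not> bdig (f1 - hi (b @ [False])) l) \<or>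
       (l > 0 \<and> \<not> bdig (hi (b @ [False]) - f0) l \<and> bdig (f1 - hi (b @ [False])) l)")
    case True
    then show ?thesis using Suc.prems(2) IH
      unfolding opt_step[OF lb, of l f0 f1 u] opt_step[OF lb, of l f0 f1 "u @ t"]
      by (auto split: if_splits)
  next
    case False
    hence eq: "\<And>v. opt n \<phi> F b l f0 f1 v = Option.bind (opt_loop (hi (b @ [False]) - f0) (f1 - hi (b @ [False])) l v)
         (\<lambda>r. if fst r then opt n \<phi> F (b @ [True]) (fst (snd r)) (hi (b @ [False])) f1 (snd (snd r))
              else opt n \<phi> F (b @ [False]) (fst (snd r)) f0 (hi (b @ [False])) (snd (snd r)))"
      using False by (subst opt_step[OF lb]) auto
    obtain q where q: "opt_loop (hi (b @ [False]) - f0) (f1 - hi (b @ [False])) l u = Some q"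
      and rest0: "(if fst q then opt n \<phi> F (b @ [True]) (fst (snd q)) (hi (b @ [False])) f1 (snd (snd q))
              else opt n \<phi> F (b @ [False]) (fst (snd q)) f0 (hi (b @ [False])) (snd (snd q))) = Some (x, r)"
      using Suc.prems(2)[unfolded eq]
      by (cases "opt_loop (hi (b @ [False]) - f0) (f1 - hi (b @ [False])) l u") auto
    obtain y l' r0 where yq: "q = (y, l', r0)" by (cases q) auto
    have lp: "opt_loop (hi (b @ [False]) - f0) (f1 - hi (b @ [False])) l u = Some (y, l', r0)"
      using q unfolding yq by simp
    have rest: "(if y then opt n \<phi> F (b @ [True]) l' (hi (b @ [False])) f1 r0
              else opt n \<phi> F (b @ [False]) l' f0 (hi (b @ [False])) r0) = Some (x, r)"
      using rest0 unfolding yq fst_conv snd_conv by simp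
    show ?thesis unfolding eq using loop_frame[OF lp, of t] rest IH
      by (auto split: if_splits)
  qed
qed

end

lemma floor_add_bounds: "0 \<le> \<lfloor>(u::real) + v\<rfloor> - \<lfloor>u\<rfloor> - \<lfloor>v\<rfloor> \<and> \<lfloor>u + v\<rfloor> - \<lfloor>u\<rfloor> - \<lfloor>v\<rfloor> \<le> 1"
  by linarith

lemma bdig_zero[simp]: "\<not> bdig 0 k" unfolding bdig_def by simp

lemma prefix_split: "prefix b c \<Longrightarrow> length b < length c \<Longrightarrow> prefix (b @ [False]) c \<or> prefix (b @ [True]) c"
proof -
  assume "prefix b c" "length b < length c"
  then obtain z zs where "c = b @ z # zs" by (metis prefix_def append_Nil2 less_not_refl neq_Nil_conv)
  thus ?thesis by (cases z) (auto simp: prefix_def)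
qed

lemma prefix_snoc_imp: "prefix (b @ [x]) c \<Longrightarrow> prefix b c"
  by (metis prefix_def append_assoc)

lemma prefix_FT_excl: "prefix (b @ [False]) c \<Longrightarrow> prefix (b @ [True]) c \<Longrightarrow> False"
proof -
  assume "prefix (b @ [False]) c" "prefix (b @ [True]) c"
  then obtain u v where "c = b @ False # u" "c = b @ True # v" by (auto simp: prefix_def)
  thus False by simp
qed

context S begin

definition A :: "bool list \<Rightarrow> nat \<Rightarrow> bool list \<Rightarrow> nat \<Rightarrow> nat" where
  "A b L c j = card {w. length w = j \<and> opt n \<phi> F b L (lo b) (hi b) w = Some (\<phi> c, [])}"

definition loopres :: "bool list \<Rightarrow> nat \<Rightarrow> bool list \<Rightarrow> (bool list \<times> bool list) option" where
  "loopres b L w = Option.bind (opt_loop (hi (b @ [False]) - lo b) (hi b - hi (b @ [False])) L w)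
         (\<lambda>r. if fst r then opt n \<phi> F (b @ [True]) (fst (snd r)) (hi (b @ [False])) (hi b) (snd (snd r))
              else opt n \<phi> F (b @ [False]) (fst (snd r)) (lo b) (hi (b @ [False])) (snd (snd r)))"

definition B :: "bool list \<Rightarrow> nat \<Rightarrow> bool list \<Rightarrow> nat \<Rightarrow> nat" where
  "B b L c j = card {w. length w = j \<and> loopres b L w = Some (\<phi> c, [])}"

lemma B_0: "B b L c 0 = 0"
  unfolding B_def loopres_def by (simp add: opt_loop.simps)

lemma loopres_Cons: "loopres b L (x # w) =
   (if \<not> x \<and> bdig (hi (b @ [False]) - lo b) (Suc L) then opt n \<phi> F (b @ [False]) (Suc L) (lo b) (hi (b @ [False])) w
    else if x \<and> bdig (hi b - hi (b @ [False])) (Suc L) then opt n \<phi> F (b @ [True]) (Suc L) (hi (b @ [False])) (hi b) w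
    else loopres b (Suc L) w)"
  unfolding loopres_def by (subst opt_loop.simps) simp

lemma B_Suc: "length b < n \<Longrightarrow> B b L c (Suc j) =
   (if bdig (hi (b @ [False]) - lo b) (Suc L) then A (b @ [False]) (Suc L) c j else B b (Suc L) c j) +
   (if bdig (hi b - hi (b @ [False])) (Suc L) then A (b @ [True]) (Suc L) c j else B b (Suc L) c j)"
proof -
  assume lb: "length b < n"
  let ?x = "bdig (hi (b @ [False]) - lo b) (Suc L)"
  let ?y = "bdig (hi b - hi (b @ [False])) (Suc L)"
  have pw: "\<And>w. loopres b L (False # w) = (if ?x then opt n \<phi> F (b @ [False]) (Suc L) (lo (b @ [False])) (hi (b @ [False])) w else loopres b (Suc L) w)"
    "\<And>w. loopres b L (True # w) = (if ?y then opt n \<phi> F (b @ [True]) (Suc L) (lo (b @ [True])) (hi (b @ [True])) w else loopres b (Suc L) w)"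
    unfolding loopres_Cons lo_False lo_True hi_True[OF lb] by simp_all
  show ?thesis
    unfolding B_def card_Suc_list pw
    by (cases ?x; cases ?y) (simp_all only: A_def B_def if_True if_False)
qed

lemma inj_phi: "inj_on \<phi> (strs n)" using bij bij_betw_def by blast

lemma A_full: "length b = n \<Longrightarrow> c \<in> strs n \<Longrightarrow> A b L c j = (if j = 0 \<and> b = c then 1 else 0)"
proof -
  assume lb: "length b = n" and c: "c \<in> strs n"
  have "\<phi> b = \<phi> c \<longleftrightarrow> b = c" using inj_phi lb c by (auto simp: strs_def inj_on_def)
  hence "{w. length w = j \<and> opt n \<phi> F b L (lo b) (hi b) w = Some (\<phi> c, [])} = (if j = 0 \<and> b = c then {[]} else {})"
    using opt_full[OF lb] by auto
  thus ?thesis unfolding A_def by simp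
qed

lemma A_step: "length b < n \<Longrightarrow> A b L c j =
   (if hi (b @ [False]) = hi b then A (b @ [False]) L c j
    else if hi (b @ [False]) = lo b then A (b @ [True]) L c j
    else if 0 < L \<and> bdig (hi (b @ [False]) - lo b) L \<and> \<not> bdig (hi b - hi (b @ [False])) L then A (b @ [False]) L c j
    else if 0 < L \<and> \<not> bdig (hi (b @ [False]) - lo b) L \<and> bdig (hi b - hi (b @ [False])) L then A (b @ [True]) L c j
    else B b L c j)"
proof -
  assume lb: "length b < n"
  let ?C1 = "hi (b @ [False]) = hi b"
  let ?C2 = "hi (b @ [False]) = lo b"
  let ?C3 = "0 < L \<and> bdig (hi (b @ [False]) - lo b) L \<and> \<not> bdig (hi b - hi (b @ [False])) L"
  let ?C4 = "0 < L \<and> \<not> bdig (hi (b @ [False]) - lo b) L \<and> bdig (hi b - hi (b @ [False])) L"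
  have pw: "\<And>w. opt n \<phi> F b L (lo b) (hi b) w = (if ?C1 then opt n \<phi> F (b @ [False]) L (lo (b @ [False])) (hi (b @ [False])) w
     else if ?C2 then opt n \<phi> F (b @ [True]) L (lo (b @ [True])) (hi (b @ [True])) w
     else if ?C3 then opt n \<phi> F (b @ [False]) L (lo (b @ [False])) (hi (b @ [False])) w
     else if ?C4 then opt n \<phi> F (b @ [True]) L (lo (b @ [True])) (hi (b @ [True])) w
     else loopres b L w)"
    unfolding loopres_def lo_False lo_True hi_True[OF lb] by (subst opt_step[OF lb]) (rule refl)
  show ?thesis
  proof (cases ?C1)
    case c1: True
    show ?thesis unfolding A_def B_def pw if_P[OF c1] ..
  next
    case c1: False
    show ?thesis
    proof (cases ?C2)
      case c2: True
      show ?thesis unfolding A_def B_def pw if_not_P[OF c1] if_P[OF c2] ..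
    next
      case c2: False
      show ?thesis
      proof (cases ?C3)
        case c3: True
        show ?thesis unfolding A_def B_def pw if_not_P[OF c1] if_not_P[OF c2] if_P[OF c3] ..
      next
        case c3: False
        show ?thesis
        proof (cases ?C4)
          case c4: True
          show ?thesis unfolding A_def B_def pw if_not_P[OF c1] if_not_P[OF c2] if_not_P[OF c3] if_P[OF c4] ..
        next
          case c4: False
          show ?thesis unfolding A_def B_def pw if_not_P[OF c1] if_not_P[OF c2] if_not_P[OF c3] if_not_P[OF c4] ..
        qed
      qed
    qed
  qed
qed

end

context S begin

lemma sg_sub: "prefix d c \<Longrightarrow> length c \<le> n \<Longrightarrow> sg c \<le> sg d \<and> 0 \<le> sg c"
proof -
  assume "prefix d c" "length c \<le> n"
  then obtain e where "c = d @ e" by (auto simp: prefix_def)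
  thus ?thesis using sub_mono[of d e] lo_le_hi[of c] \<open>length c \<le> n\<close> unfolding sg_def by auto
qed

lemma Q: "length b \<le> n \<Longrightarrow> c \<in> strs n \<Longrightarrow>
  (\<Sum>L\<le>k. if bdig (sg b) L then A b L c (k - L) else 0) = (if prefix b c \<and> bdig (sg c) k then 1 else 0)"
proof (induction "n - length b" arbitrary: b k)
  case 0
  hence lb: "length b = n" by simp
  have lc: "length c = n" using 0 by (simp add: strs_def)
  have pc: "prefix b c \<longleftrightarrow> b = c" using lb lc by (auto simp: prefix_def)
  have "(\<Sum>L\<le>k. if bdig (sg b) L then A b L c (k - L) else 0) = (\<Sum>L\<le>k. if L = k then (if b = c \<and> bdig (sg b) k then 1 else 0) else 0)"
    unfolding A_full[OF lb 0(3)] by (rule sum.cong) auto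
  also have "\<dots> = (if b = c \<and> bdig (sg b) k then 1 else 0)" by simp
  finally show ?case using pc by auto
next
  case (Suc h)
  hence lb: "length b < n" by simp
  have IH: "\<And>x k. (\<Sum>L\<le>k. if bdig (sg (b @ [x])) L then A (b @ [x]) L c (k - L) else 0) =
      (if prefix (b @ [x]) c \<and> bdig (sg c) k then 1 else 0)"
    using Suc.hyps(1)[of "b @ [_]"] Suc.hyps(2) Suc.prems lb by simp
  have lc: "length c = n" using Suc.prems by (simp add: strs_def)
  define a0 where "a0 = hi (b @ [False]) - lo b"
  define a1 where "a1 = hi b - hi (b @ [False])"
  have sg0: "sg (b @ [False]) = a0" unfolding a0_def sg_def by simp
  have sg1: "sg (b @ [True]) = a1" unfolding a1_def sg_def using hi_True[OF lb] by simp
  have sgb: "sg b = a0 + a1" unfolding a0_def a1_def sg_def by simp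
  have a0nn: "0 \<le> a0" using lo_le_mid[OF lb] a0_def by simp
  have a1nn: "0 \<le> a1" using mid_le_hi[OF lb] a1_def by simp
  have sgle: "a0 + a1 \<le> 1" using hi_rng[of b] lo_nonneg[of b] lb unfolding a0_def a1_def by simp
  have split: "prefix b c \<longleftrightarrow> prefix (b @ [False]) c \<or> prefix (b @ [True]) c"
    using prefix_split[of b c] prefix_snoc_imp lb lc by auto
  have excl: "\<not> (prefix (b @ [False]) c \<and> prefix (b @ [True]) c)" using prefix_FT_excl by blast
  show ?case
  proof (cases "hi (b @ [False]) = hi b")
    case c1: True
    have Ae: "A b L c j = A (b @ [False]) L c j" for L j using A_step[OF lb] c1 by simp
    have se: "sg b = sg (b @ [False])" using sgb sg0 c1 a1_def by simp
    have z: "prefix (b @ [True]) c \<Longrightarrow> sg c = 0"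
      using sg_sub[of "b @ [True]" c] lc sg1 c1 a1_def by simp
    have "(\<Sum>L\<le>k. if bdig (sg b) L then A b L c (k - L) else 0) =
      (\<Sum>L\<le>k. if bdig (sg (b @ [False])) L then A (b @ [False]) L c (k - L) else 0)"
      unfolding Ae se ..
    then show ?thesis using IH[of False k] split z by auto
  next
    case c1: False
    show ?thesis
    proof (cases "hi (b @ [False]) = lo b")
      case c2: True
      have Ae: "A b L c j = A (b @ [True]) L c j" for L j using A_step[OF lb] c1 c2 by simp
      have se: "sg b = sg (b @ [True])" using sgb sg1 c2 a0_def by simp
      have z: "prefix (b @ [False]) c \<Longrightarrow> sg c = 0"
        using sg_sub[of "b @ [False]" c] lc sg0 c2 a0_def by simp
      have "(\<Sum>L\<le>k. if bdig (sg b) L then A b L c (k - L) else 0) =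
        (\<Sum>L\<le>k. if bdig (sg (b @ [True])) L then A (b @ [True]) L c (k - L) else 0)"
        unfolding Ae se ..
      then show ?thesis using IH[of True k] split z by auto
    next
      case c2: False
      have pos0: "0 < a0" using a0nn c2 a0_def by simp
      have pos1: "0 < a1" using a1nn c1 a1_def by simp
      have lt0: "a0 < 1" using pos1 sgle by simp
      have lt1: "a1 < 1" using pos0 sgle by simp
      define car where "car m = nat (\<lfloor>(a0 + a1) * 2 ^ m\<rfloor> - \<lfloor>a0 * 2 ^ m\<rfloor> - \<lfloor>a1 * 2 ^ m\<rfloor>)" for m
      have carI: "int (car m) = \<lfloor>(a0 + a1) * 2 ^ m\<rfloor> - \<lfloor>a0 * 2 ^ m\<rfloor> - \<lfloor>a1 * 2 ^ m\<rfloor>" for m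
        unfolding car_def using floor_add_bounds[of "a0 * 2 ^ m" "a1 * 2 ^ m"] by (simp add: distrib_right)
      have cb: "car m \<le> 1" for m
        using floor_add_bounds[of "a0 * 2 ^ m" "a1 * 2 ^ m"] carI[of m] by (simp add: distrib_right)
      have fl0: "\<lfloor>a0\<rfloor> = 0" "\<lfloor>a1\<rfloor> = 0" using pos0 pos1 lt0 lt1 by linarith+
      have x0: "\<not> bdig a0 0" "\<not> bdig a1 0" unfolding bdig_def using fl0 by simp_all
      have c0: "car 0 = of_bool (bdig (a0 + a1) 0)"
      proof -
        have "\<lfloor>a0 + a1\<rfloor> = 0 \<or> \<lfloor>a0 + a1\<rfloor> = 1" using pos0 pos1 sgle by linarith
        thus ?thesis
        proof
          assume h: "\<lfloor>a0 + a1\<rfloor> = 0"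
          show ?thesis unfolding car_def bdig_def power_0 mult_1_right h fl0 by simp
        next
          assume h: "\<lfloor>a0 + a1\<rfloor> = 1"
          show ?thesis unfolding car_def bdig_def power_0 mult_1_right h fl0 by simp
        qed
      qed
      have rel: "int (car (Suc m)) + of_bool (bdig a0 (Suc m)) + of_bool (bdig a1 (Suc m)) =
          of_bool (bdig (a0 + a1) (Suc m)) + 2 * int (car m)" for m
        using bdig_Suc[of a0 m] bdig_Suc[of a1 m] bdig_Suc[of "a0 + a1" m] carI[of m] carI[of "Suc m"]
        by simp
      have Aeq: "A b L c j = (if 0 < L \<and> bdig a0 L \<and> \<not> bdig a1 L then A (b @ [False]) L c j
          else if 0 < L \<and> \<not> bdig a0 L \<and> bdig a1 L then A (b @ [True]) L c j else B b L c j)" for L j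
        using A_step[OF lb, of L c j] c1 c2 unfolding a0_def a1_def by simp
      have "(\<Sum>L\<le>k. if bdig (sg b) L then A b L c (k - L) else 0)
          = (\<Sum>L\<le>k. if bdig (a0 + a1) L then (if 0 < L \<and> bdig a0 L \<and> \<not> bdig a1 L then A (b @ [False]) L c (k - L)
          else if 0 < L \<and> \<not> bdig a0 L \<and> bdig a1 L then A (b @ [True]) L c (k - L) else B b L c (k - L)) else 0)"
        unfolding sgb Aeq ..
      also have "\<dots> = (\<Sum>L\<le>k. if bdig a0 L then A (b @ [False]) L c (k - L) else 0) +
                      (\<Sum>L\<le>k. if bdig a1 L then A (b @ [True]) L c (k - L) else 0)"
      proof (rule carry_sum[where car = car])
        show "car 0 = of_bool (bdig (a0 + a1) 0)" by (rule c0)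
        show "\<not> bdig a0 0" "\<not> bdig a1 0" by (rule x0(1), rule x0(2))
        show "int (car (Suc m)) + of_bool (bdig a0 (Suc m)) + of_bool (bdig a1 (Suc m)) =
          of_bool (bdig (a0 + a1) (Suc m)) + 2 * int (car m)" for m by (rule rel)
        show "car m \<le> 1" for m by (rule cb)
        show "B b k c (k - k) = 0" by (simp add: B_0)
        show "B b m c (k - m) = (if bdig a0 (Suc m) then A (b @ [False]) (Suc m) c (k - Suc m) else B b (Suc m) c (k - Suc m)) +
          (if bdig a1 (Suc m) then A (b @ [True]) (Suc m) c (k - Suc m) else B b (Suc m) c (k - Suc m))" if "m < k" for m
        proof -
          have "k - m = Suc (k - Suc m)" using that by simp
          thus ?thesis using B_Suc[OF lb, of m c "k - Suc m"] unfolding a0_def a1_def by simp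
        qed
      qed
      also have "\<dots> = (if prefix (b @ [False]) c \<and> bdig (sg c) k then 1 else 0) + (if prefix (b @ [True]) c \<and> bdig (sg c) k then 1 else 0)"
        using IH[of False k] IH[of True k] sg0 sg1 by simp
      also have "\<dots> = (if prefix b c \<and> bdig (sg c) k then 1 else 0)"
        using split excl by auto
      finally show ?thesis .
    qed
  qed
qed

end

lemma suminf_swap_ennreal:
  fixes f :: "nat \<Rightarrow> nat \<Rightarrow> ennreal"
  shows "(\<Sum>i. \<Sum>j. f i j) = (\<Sum>j. \<Sum>i. f i j)"
proof -
  have "(\<Sum>i. \<Sum>j. f i j) = (\<integral>\<^sup>+i. (\<Sum>j. f i j) \<partial>count_space UNIV)"
    by (rule nn_integral_count_space_nat[symmetric])
  also have "\<dots> = (\<Sum>j. \<integral>\<^sup>+i. f i j \<partial>count_space UNIV)"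
    by (rule nn_integral_suminf) simp
  also have "\<dots> = (\<Sum>j. \<Sum>i. f i j)"
    by (simp add: nn_integral_count_space_nat)
  finally show ?thesis .
qed

lemma finite_len_lt: "finite {u::bool list. length u < N}"
  by (rule finite_subset[OF _ finite_lists_length_le[of "UNIV::bool set" N]]) auto

lemma finite_len_eq: "finite {u::bool list. length u = j \<and> P u}"
  by (rule finite_subset[OF _ finite_lists_length_eq[of "UNIV::bool set" j]]) auto

lemma sum_len_split:
  fixes g :: "nat \<Rightarrow> ennreal" and U :: "bool list set"
  shows "(\<Sum>j<N. of_nat (card {u\<in>U. length u = j}) * g j) = sum (\<lambda>u. g (length u)) {u\<in>U. length u < N}"
proof (induction N)
  case 0
  then show ?case by simp
next
  case (Suc N)
  have e: "{u\<in>U. length u < Suc N} = {u\<in>U. length u < N} \<union> {u\<in>U. length u = N}" by auto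
  have f1: "finite {u\<in>U. length u < N}" by (rule finite_subset[OF _ finite_len_lt[of N]]) auto
  have f2: "finite {u\<in>U. length u = N}" using finite_len_eq[of N "\<lambda>u. u \<in> U"] by (simp add: conj_commute)
  have "sum (\<lambda>u. g (length u)) {u\<in>U. length u = N} = sum (\<lambda>u. g N) {u\<in>U. length u = N}"
    by (rule sum.cong) auto
  hence "sum (\<lambda>u. g (length u)) {u\<in>U. length u = N} = of_nat (card {u\<in>U. length u = N}) * g N"
    by simp
  then show ?case unfolding e using Suc f1 f2
    by (subst sum.union_disjoint) auto
qed

lemma infsum_len:
  fixes g :: "nat \<Rightarrow> ennreal" and U :: "bool list set"
  shows "(\<Sum>\<^sub>\<infinity>u\<in>U. g (length u)) = (\<Sum>j. of_nat (card {u\<in>U. length u = j}) * g j)"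
proof -
  have L: "(\<Sum>\<^sub>\<infinity>u\<in>U. g (length u)) = (SUP F\<in>{F. finite F \<and> F \<subseteq> U}. sum (\<lambda>u. g (length u)) F)"
    by (rule nonneg_infsum_complete) simp
  have R: "(\<Sum>j. of_nat (card {u\<in>U. length u = j}) * g j) = (SUP N. \<Sum>j<N. of_nat (card {u\<in>U. length u = j}) * g j)"
    by (rule suminf_eq_SUP)
  have fin: "finite {u\<in>U. length u < N}" for N by (rule finite_subset[OF _ finite_len_lt[of N]]) auto
  show ?thesis unfolding L R sum_len_split
  proof (rule antisym)
    show "(SUP F\<in>{F. finite F \<and> F \<subseteq> U}. sum (\<lambda>u. g (length u)) F) \<le> (SUP N. sum (\<lambda>u. g (length u)) {u \<in> U. length u < N})"
    proof (rule SUP_least)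
      fix F assume "F \<in> {F. finite F \<and> F \<subseteq> U}"
      hence fF: "finite F" and FU: "F \<subseteq> U" by auto
      define N where "N = Suc (Max (insert 0 (length ` F)))"
      have "F \<subseteq> {u \<in> U. length u < N}"
      proof
        fix u assume "u \<in> F"
        hence "length u \<le> Max (insert 0 (length ` F))" using fF by (intro Max_ge) auto
        thus "u \<in> {u \<in> U. length u < N}" using FU \<open>u \<in> F\<close> N_def by auto
      qed
      hence "sum (\<lambda>u. g (length u)) F \<le> sum (\<lambda>u. g (length u)) {u \<in> U. length u < N}"
        by (intro sum_mono2[OF fin]) auto
      also have "\<dots> \<le> (SUP N. sum (\<lambda>u. g (length u)) {u \<in> U. length u < N})"
        by (rule SUP_upper) simp
      finally show "sum (\<lambda>u. g (length u)) F \<le> (SUP N. sum (\<lambda>u. g (length u)) {u \<in> U. length u < N})" .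
    qed
  next
    show "(SUP N. sum (\<lambda>u. g (length u)) {u \<in> U. length u < N}) \<le> (SUP F\<in>{F. finite F \<and> F \<subseteq> U}. sum (\<lambda>u. g (length u)) F)"
      by (rule SUP_least, rule SUP_upper) (use fin in auto)
  qed
qed

lemma bdig_partial: "0 \<le> p \<Longrightarrow> p < 2 \<Longrightarrow> (\<Sum>j<Suc k. of_bool (bdig p j) * (1/2::real)^j) = \<lfloor>p * 2^k\<rfloor> / 2^k"
proof (induction k)
  case 0
  have "\<lfloor>p\<rfloor> = 0 \<or> \<lfloor>p\<rfloor> = 1" using 0 by linarith
  then show ?case unfolding bdig_def by auto
next
  case (Suc k)
  have r: "(of_bool (bdig p (Suc k)) :: real) = real_of_int (\<lfloor>p * 2 ^ Suc k\<rfloor> - 2 * \<lfloor>p * 2 ^ k\<rfloor>)"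
    using bdig_Suc[of p k] by (metis of_int_of_bool)
  show ?case
    unfolding sum.lessThan_Suc[of _ "Suc k"] Suc.IH[OF Suc.prems] r
    by (simp add: field_simps power_divide)
qed

lemma floor_div_tendsto: "(\<lambda>k. \<lfloor>p * 2^k\<rfloor> / (2::real)^k) \<longlonglongrightarrow> p"
proof (rule tendsto_sandwich[of "\<lambda>k. p - (1/2)^k" _ sequentially "\<lambda>k. p"])
  show "\<forall>\<^sub>F k in sequentially. p - (1/2)^k \<le> \<lfloor>p * 2^k\<rfloor> / (2::real)^k"
  proof (rule always_eventually, rule allI)
    fix k :: nat
    have "p * 2^k - 1 \<le> \<lfloor>p * 2^k\<rfloor>" by linarith
    hence "(p * 2^k - 1) / 2^k \<le> \<lfloor>p * 2^k\<rfloor> / (2::real)^k" by (intro divide_right_mono) auto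
    thus "p - (1/2)^k \<le> \<lfloor>p * 2^k\<rfloor> / (2::real)^k" by (simp add: field_simps power_divide)
  qed
  show "\<forall>\<^sub>F k in sequentially. \<lfloor>p * 2^k\<rfloor> / (2::real)^k \<le> p"
  proof (rule always_eventually, rule allI)
    fix k :: nat
    have "\<lfloor>p * 2^k\<rfloor> \<le> p * 2^k" by linarith
    thus "\<lfloor>p * 2^k\<rfloor> / (2::real)^k \<le> p" by (simp add: field_simps)
  qed
  show "(\<lambda>k. p - (1/2::real)^k) \<longlonglongrightarrow> p"
    using tendsto_diff[OF tendsto_const LIMSEQ_realpow_zero[of "1/2::real"]] by simp
qed simp

lemma bdig_sums: "0 \<le> p \<Longrightarrow> p < 2 \<Longrightarrow> (\<lambda>j. of_bool (bdig p j) * (1/2::real)^j) sums p"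
  unfolding sums_def
  by (rule LIMSEQ_imp_Suc) (simp only: bdig_partial floor_div_tendsto)

lemma bdig_sum_ennreal: "0 \<le> p \<Longrightarrow> p \<le> 1 \<Longrightarrow>
   (\<Sum>j. of_nat (of_bool (bdig p j)) * ennreal ((1/2)^j)) = ennreal p"
proof -
  assume a: "0 \<le> p" "p \<le> 1"
  have s: "(\<lambda>j. of_bool (bdig p j) * (1/2::real)^j) sums p" using bdig_sums a by simp
  have "(\<Sum>j. of_nat (of_bool (bdig p j)) * ennreal ((1/2)^j)) = (\<Sum>j. ennreal (of_bool (bdig p j) * (1/2::real)^j))"
    by (rule suminf_cong) (simp add: ennreal_mult')
  also have "\<dots> = ennreal (\<Sum>j. of_bool (bdig p j) * (1/2::real)^j)"
    by (rule suminf_ennreal2) (use s in \<open>auto simp: sums_iff\<close>)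
  also have "\<dots> = ennreal p" using s sums_unique by metis
  finally show ?thesis .
qed

lemma tail_split_ennreal:
  fixes w :: "nat \<Rightarrow> ennreal"
  shows "(\<Sum>j. w j) = (\<Sum>j<Suc k. w j) + (\<Sum>j. if k < j then w j else 0)"
proof -
  have "(\<Sum>j. w j) = (\<Sum>j. (if j < Suc k then w j else 0) + (if k < j then w j else 0))"
    by (rule suminf_cong) auto
  also have "\<dots> = (\<Sum>j. if j < Suc k then w j else 0) + (\<Sum>j. if k < j then w j else 0)"
    by (rule suminf_add[symmetric]) auto
  also have "(\<Sum>j. if j < Suc k then w j else 0) = (\<Sum>j<Suc k. w j)"
    by (subst suminf_finite[of "{..<Suc k}"]) auto
  finally show ?thesis .
qed

lemma cost_as_tails:
  fixes w :: "nat \<Rightarrow> ennreal"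
  shows "(\<Sum>j. of_nat j * w j) = (\<Sum>k. \<Sum>j. if k < j then w j else 0)"
proof -
  have "(\<Sum>j. of_nat j * w j) = (\<Sum>j. \<Sum>k. if k < j then w j else 0)"
  proof (rule suminf_cong)
    fix j
    have "(\<Sum>k. if k < j then w j else 0) = (\<Sum>k<j. w j)"
      by (subst suminf_finite[of "{..<j}"]) auto
    thus "of_nat j * w j = (\<Sum>k. if k < j then w j else 0)" by simp
  qed
  also have "\<dots> = (\<Sum>k. \<Sum>j. if k < j then w j else 0)" by (rule suminf_swap_ennreal)
  finally show ?thesis .
qed

lemma partial_int:
  fixes c :: "nat \<Rightarrow> nat"
  shows "(\<Sum>j<Suc k. real (c j) * (1/2)^j) * 2^k = real (\<Sum>j<Suc k. c j * 2^(k-j))"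
proof -
  have "(\<Sum>j<Suc k. real (c j) * (1/2)^j) * 2^k = (\<Sum>j<Suc k. real (c j) * ((1/2)^j * 2^k))"
    by (simp only: sum_distrib_right mult.assoc)
  also have "\<dots> = (\<Sum>j<Suc k. real (c j) * 2^(k-j))"
  proof (rule sum.cong)
    fix j assume "j \<in> {..<Suc k}"
    hence "j \<le> k" by simp
    hence "(2::real)^k = 2^j * 2^(k-j)" by (simp add: power_add[symmetric])
    thus "real (c j) * ((1/2)^j * 2^k) = real (c j) * 2^(k-j)" by (simp add: power_divide)
  qed simp
  finally show ?thesis by simp
qed

lemma cost_cmp:
  fixes c :: "nat \<Rightarrow> nat" and p :: real
  assumes p: "0 \<le> p" "p \<le> 1"
    and hc: "(\<Sum>j. of_nat (c j) * ennreal ((1/2)^j)) = ennreal p"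
  shows "(\<Sum>j. of_nat (of_bool (bdig p j)) * ennreal (real j * (1/2)^j)) \<le> (\<Sum>j. of_nat (c j) * ennreal (real j * (1/2)^j))"
proof -
  define wc where "wc j = of_nat (c j) * ennreal ((1/2)^j)" for j
  define wd where "wd j = of_nat (of_bool (bdig p j)) * ennreal ((1/2)^j)" for j
  have ec: "of_nat (c j) * ennreal (real j * (1/2)^j) = of_nat j * wc j" for j
    unfolding wc_def by (simp add: ennreal_mult' ennreal_of_nat_eq_real_of_nat mult.left_commute)
  have ed: "of_nat (of_bool (bdig p j)) * ennreal (real j * (1/2)^j) = of_nat j * wd j" for j
    unfolding wd_def by (simp add: ennreal_mult' ennreal_of_nat_eq_real_of_nat mult.left_commute)
  have sd: "(\<Sum>j. wd j) = ennreal p" unfolding wd_def by (rule bdig_sum_ennreal[OF p])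
  have sc: "(\<Sum>j. wc j) = ennreal p" unfolding wc_def by (rule hc)
  have tails: "(\<Sum>j. if k < j then wd j else 0) \<le> (\<Sum>j. if k < j then wc j else 0)" for k
  proof -
    define Pc where "Pc = (\<Sum>j<Suc k. real (c j) * (1/2)^j)"
    have Pc_e: "(\<Sum>j<Suc k. wc j) = ennreal Pc" unfolding wc_def Pc_def
      by (subst sum_ennreal[symmetric]) (auto simp: ennreal_mult' ennreal_of_nat_eq_real_of_nat)
    define Pd where "Pd = (\<Sum>j<Suc k. of_bool (bdig p j) * (1/2::real)^j)"
    have Pd_e: "(\<Sum>j<Suc k. wd j) = ennreal Pd" unfolding wd_def Pd_def
      by (subst sum_ennreal[symmetric]) (auto simp: ennreal_mult' ennreal_of_nat_eq_real_of_nat)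
    have Pd_v: "Pd = \<lfloor>p * 2^k\<rfloor> / 2^k" unfolding Pd_def using p by (intro bdig_partial) auto
    have Pcnn: "0 \<le> Pc" unfolding Pc_def by (intro sum_nonneg) auto
    have spc: "ennreal p = ennreal Pc + (\<Sum>j. if k < j then wc j else 0)"
      using tail_split_ennreal[of wc k] sc Pc_e by simp
    have spd: "ennreal p = ennreal Pd + (\<Sum>j. if k < j then wd j else 0)"
      using tail_split_ennreal[of wd k] sd Pd_e by simp
    have "ennreal Pc \<le> ennreal p" using spc by (metis le_iff_add)
    hence Pcp: "Pc \<le> p" using p by (simp add: ennreal_le_iff)
    define N where "N = (\<Sum>j<Suc k. c j * 2^(k-j))"
    have e: "Pc * 2^k = real N" unfolding Pc_def N_def by (rule partial_int)
    have "Pc * 2^k \<le> p * 2^k" by (rule mult_right_mono[OF Pcp]) simp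
    hence "real_of_int (int N) \<le> p * 2^k" using e by simp
    hence "int N \<le> \<lfloor>p * 2^k\<rfloor>" by (simp only: le_floor_iff)
    hence "real N \<le> real_of_int \<lfloor>p * 2^k\<rfloor>" by (metis of_int_of_nat_eq of_int_le_iff)
    hence "Pc * 2^k \<le> \<lfloor>p * 2^k\<rfloor>" using e by simp
    hence PcPd: "Pc \<le> Pd" unfolding Pd_v by (simp add: field_simps)
    have "(\<Sum>j. if k < j then wd j else 0) = ennreal p - ennreal Pd" using spd by simp
    also have "\<dots> \<le> ennreal p - ennreal Pc" using PcPd by (intro ennreal_minus_mono ennreal_leI) auto
    also have "\<dots> = (\<Sum>j. if k < j then wc j else 0)" using spc by simp
    finally show ?thesis .
  qed
  have "(\<Sum>j. of_nat (of_bool (bdig p j)) * ennreal (real j * (1/2)^j)) = (\<Sum>k. \<Sum>j. if k < j then wd j else 0)"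
    unfolding ed by (rule cost_as_tails)
  also have "\<dots> \<le> (\<Sum>k. \<Sum>j. if k < j then wc j else 0)"
    by (rule suminf_le) (use tails in auto)
  also have "\<dots> = (\<Sum>j. of_nat (c j) * ennreal (real j * (1/2)^j))"
    unfolding ec by (rule cost_as_tails[symmetric])
  finally show ?thesis .
qed

lemma infsum_gen:
  fixes Y :: "bool list \<Rightarrow> bool list option" and g :: "nat \<Rightarrow> ennreal"
  assumes fS: "finite SS"
  shows "(\<Sum>\<^sub>\<infinity>u\<in>{u. \<exists>s\<in>SS. Y u = Some s}. g (length u)) =
     (\<Sum>s\<in>SS. \<Sum>j. of_nat (card {u. Y u = Some s \<and> length u = j}) * g j)"
proof -
  have cardeq: "card {u \<in> {u. \<exists>s\<in>SS. Y u = Some s}. length u = j} = (\<Sum>s\<in>SS. card {u. Y u = Some s \<and> length u = j})" for j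
  proof -
    have e: "{u \<in> {u. \<exists>s\<in>SS. Y u = Some s}. length u = j} = (\<Union>s\<in>SS. {u. Y u = Some s \<and> length u = j})" by auto
    have f: "finite {u. Y u = Some s \<and> length u = j}" for s
      using finite_len_eq[of j "\<lambda>u. Y u = Some s"] by (simp add: conj_commute)
    show ?thesis unfolding e
      by (rule card_UN_disjoint[OF fS]) (use f in auto)
  qed
  have "(\<Sum>\<^sub>\<infinity>u\<in>{u. \<exists>s\<in>SS. Y u = Some s}. g (length u)) =
      (\<Sum>j. of_nat (card {u \<in> {u. \<exists>s\<in>SS. Y u = Some s}. length u = j}) * g j)"
    by (rule infsum_len)
  also have "\<dots> = (\<Sum>j. \<Sum>s\<in>SS. of_nat (card {u. Y u = Some s \<and> length u = j}) * g j)"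
    unfolding cardeq by (simp add: sum_distrib_right)
  also have "\<dots> = (\<Sum>s\<in>SS. \<Sum>j. of_nat (card {u. Y u = Some s \<and> length u = j}) * g j)"
    by (rule suminf_sum) simp
  finally show ?thesis .
qed

lemma lexordp_TF_false: "\<not> ord_class.lexordp (b @ True # x) (b @ False # y)"
  by (induction b) auto

lemma finite_strs: "finite (strs n)"
  unfolding strs_def using finite_lists_length_eq[of "UNIV::bool set" n] by simp

context S begin

abbreviation psi where "psi \<equiv> inv_into (strs n) \<phi>"

lemma psi_strs: "s \<in> strs n \<Longrightarrow> psi s \<in> strs n \<and> \<phi> (psi s) = s"
proof -
  assume s: "s \<in> strs n"
  have im: "\<phi> ` strs n = strs n" using bij by (rule bij_betw_imp_surj_on)
  show ?thesis using s im inv_into_into[of s \<phi> "strs n"] f_inv_into_f[of s \<phi> "strs n"] by simp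
qed

lemma psi_phi: "c \<in> strs n \<Longrightarrow> psi (\<phi> c) = c"
  using inj_phi by (simp add: inv_into_f_f)

lemma opt_gen_iff: "opt_gen n \<phi> F u = Some s \<longleftrightarrow> opt n \<phi> F [] 0 0 1 u = Some (s, [])"
  unfolding opt_gen_def by (auto split: option.splits list.splits prod.splits)

lemma opt_gen_range: "opt_gen n \<phi> F u = Some s \<Longrightarrow> s \<in> strs n"
  using opt_frame[of "[]" 0 0 1 u s "[]" "[]"] unfolding opt_gen_iff by simp

lemma bdig_one: "bdig 1 L \<longleftrightarrow> L = 0"
proof (cases L)
  case 0 then show ?thesis by (simp add: bdig_def)
next
  case (Suc m)
  have "(1::real) * 2 ^ L = real_of_int (2 * 2 ^ m)" using Suc by simp
  hence "\<lfloor>(1::real) * 2 ^ L\<rfloor> = 2 * 2 ^ m" by (simp only: floor_of_int)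
  hence "\<lfloor>(1::real) * 2 ^ L\<rfloor> mod 2 = 0" by simp
  then show ?thesis unfolding bdig_def using Suc by simp
qed

lemma sg_Nil: "sg [] = 1" unfolding sg_def by simp

lemma sg_rng: "c \<in> strs n \<Longrightarrow> 0 \<le> sg c \<and> sg c \<le> 1"
  using sg_sub[of "[]" c] sg_Nil by (simp add: strs_def)

lemma root_count: "c \<in> strs n \<Longrightarrow>
   card {u. opt_gen n \<phi> F u = Some (\<phi> c) \<and> length u = k} = of_bool (bdig (sg c) k)"
proof -
  assume c: "c \<in> strs n"
  have "(\<Sum>L\<le>k. if bdig (sg []) L then A [] L c (k - L) else 0) = (\<Sum>L\<le>k. if L = 0 then A [] 0 c k else 0)"
    by (rule sum.cong) (auto simp: sg_Nil bdig_one)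
  also have "\<dots> = A [] 0 c k" by simp
  finally have "A [] 0 c k = (if prefix [] c \<and> bdig (sg c) k then 1 else 0)" using Q[of "[]" c k] c by simp
  hence eqA: "A [] 0 c k = of_bool (bdig (sg c) k)" by simp
  have "{u. opt_gen n \<phi> F u = Some (\<phi> c) \<and> length u = k} =
      {w. length w = k \<and> opt n \<phi> F [] 0 (lo []) (hi []) w = Some (\<phi> c, [])}"
    unfolding opt_gen_iff by auto
  hence "card {u. opt_gen n \<phi> F u = Some (\<phi> c) \<and> length u = k} = A [] 0 c k"
    unfolding A_def by simp
  thus ?thesis using eqA by simp
qed

lemma opt_series: "s \<in> strs n \<Longrightarrow>
  (\<Sum>j. of_nat (card {u. opt_gen n \<phi> F u = Some s \<and> length u = j}) * ennreal ((1/2)^j)) = ennreal (sg (psi s))"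
proof -
  assume s: "s \<in> strs n"
  have "card {u. opt_gen n \<phi> F u = Some s \<and> length u = j} = of_bool (bdig (sg (psi s)) j)" for j
    using root_count[of "psi s" j] psi_strs[OF s] by simp
  thus ?thesis using bdig_sum_ennreal[of "sg (psi s)"] sg_rng[of "psi s"] psi_strs[OF s] by simp
qed

lemma gen_dist_opt: "gen_dist (opt_gen n \<phi> F) s = (if s \<in> strs n then ennreal (sg (psi s)) else 0)"
proof (cases "s \<in> strs n")
  case True
  have "gen_dist (opt_gen n \<phi> F) s = (\<Sum>j. of_nat (card {u \<in> {u. opt_gen n \<phi> F u = Some s}. length u = j}) * ennreal ((1/2)^j))"
    unfolding gen_dist_def by (rule infsum_len)
  also have "\<dots> = ennreal (sg (psi s))" using opt_series[OF True] by simp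
  finally show ?thesis using True by simp
next
  case False
  hence "{u. opt_gen n \<phi> F u = Some s} = {}" using opt_gen_range by auto
  then show ?thesis unfolding gen_dist_def using False by simp
qed

lemma opt_subset_sum: "SS \<subseteq> strs n \<Longrightarrow>
  (\<Sum>\<^sub>\<infinity>u\<in>{u. \<exists>s\<in>SS. opt_gen n \<phi> F u = Some s}. ennreal ((1/2) ^ length u)) = ennreal (\<Sum>s\<in>SS. sg (psi s))"
proof -
  assume SS: "SS \<subseteq> strs n"
  have fS: "finite SS" using finite_subset[OF SS finite_strs] .
  have "(\<Sum>\<^sub>\<infinity>u\<in>{u. \<exists>s\<in>SS. opt_gen n \<phi> F u = Some s}. ennreal ((1/2) ^ length u)) =
     (\<Sum>s\<in>SS. \<Sum>j. of_nat (card {u. opt_gen n \<phi> F u = Some s \<and> length u = j}) * ennreal ((1/2)^j))"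
    by (rule infsum_gen[OF fS])
  also have "\<dots> = (\<Sum>s\<in>SS. ennreal (sg (psi s)))"
    by (rule sum.cong) (use SS opt_series in auto)
  also have "\<dots> = ennreal (\<Sum>s\<in>SS. sg (psi s))"
    by (rule sum_ennreal) (use SS sg_rng psi_strs in blast)
  finally show ?thesis .
qed

lemma sub_split: "length b < n \<Longrightarrow> {c \<in> strs n. prefix b c \<and> P c} =
   {c \<in> strs n. prefix (b @ [False]) c \<and> P c} \<union> {c \<in> strs n. prefix (b @ [True]) c \<and> P c}"
  using prefix_split prefix_snoc_imp by (auto simp: strs_def)

lemma fin_sub: "finite {c \<in> strs n. Q c}"
  by (rule finite_subset[OF _ finite_strs]) auto

lemma tot_cum: "length b \<le> n \<Longrightarrow>
   (\<Sum>c\<in>{c \<in> strs n. prefix b c}. sg c) = sg b \<and>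
   (\<forall>d\<in>strs n. prefix b d \<longrightarrow> (\<Sum>c\<in>{c \<in> strs n. prefix b c \<and> (c = d \<or> ord_class.lexordp c d)}. sg c) = F (\<phi> d) - lo b)"
proof (induction "n - length b" arbitrary: b)
  case 0
  hence lb: "length b = n" by simp
  have e1: "{c \<in> strs n. prefix b c} = {b}" using lb by (auto simp: strs_def prefix_def)
  have e2: "d \<in> strs n \<Longrightarrow> prefix b d \<Longrightarrow> {c \<in> strs n. prefix b c \<and> (c = d \<or> ord_class.lexordp c d)} = {b} \<and> d = b" for d
    using lb by (auto simp: strs_def prefix_def)
  show ?case using e1 e2 lb unfolding sg_def hi_def by auto
next
  case (Suc h)
  hence lb: "length b < n" by simp
  have IH: "\<And>x. (\<Sum>c\<in>{c \<in> strs n. prefix (b @ [x]) c}. sg c) = sg (b @ [x]) \<and>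
     (\<forall>d\<in>strs n. prefix (b @ [x]) d \<longrightarrow> (\<Sum>c\<in>{c \<in> strs n. prefix (b @ [x]) c \<and> (c = d \<or> ord_class.lexordp c d)}. sg c) = F (\<phi> d) - lo (b @ [x]))"
    using Suc.hyps(1)[of "b @ [_]"] Suc.hyps(2) lb by simp
  have disj: "{c \<in> strs n. prefix (b @ [False]) c \<and> P c} \<inter> {c \<in> strs n. prefix (b @ [True]) c \<and> P c} = {}" for P
    using prefix_FT_excl by blast
  have sumsplit: "(\<Sum>c\<in>{c \<in> strs n. prefix b c \<and> P c}. sg c) =
     (\<Sum>c\<in>{c \<in> strs n. prefix (b @ [False]) c \<and> P c}. sg c) + (\<Sum>c\<in>{c \<in> strs n. prefix (b @ [True]) c \<and> P c}. sg c)" for P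
    unfolding sub_split[OF lb, of P] by (rule sum.union_disjoint) (auto simp: fin_sub disj)
  have t: "(\<Sum>c\<in>{c \<in> strs n. prefix b c}. sg c) = sg b"
    using sumsplit[of "\<lambda>_. True"] IH[of False] IH[of True] hi_True[OF lb] unfolding sg_def by simp
  have cm: "(\<Sum>c\<in>{c \<in> strs n. prefix b c \<and> (c = d \<or> ord_class.lexordp c d)}. sg c) = F (\<phi> d) - lo b"
    if d: "d \<in> strs n" "prefix b d" for d
  proof -
    have ld: "length d = n" using d by (simp add: strs_def)
    have "prefix (b @ [False]) d \<or> prefix (b @ [True]) d" using prefix_split[OF d(2)] lb ld by simp
    thus ?thesis
    proof
      assume d0: "prefix (b @ [False]) d"
      have emp: "{c \<in> strs n. prefix (b @ [True]) c \<and> (c = d \<or> ord_class.lexordp c d)} = {}"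
      proof -
        { fix c assume c: "prefix (b @ [True]) c" "c = d \<or> ord_class.lexordp c d"
          obtain x where cx: "c = b @ True # x" using c(1) by (auto simp: prefix_def)
          obtain y where dy: "d = b @ False # y" using d0 by (auto simp: prefix_def)
          have False using c(2) cx dy lexordp_TF_false by auto }
        thus ?thesis by blast
      qed
      hence "(\<Sum>c\<in>{c \<in> strs n. prefix b c \<and> (c = d \<or> ord_class.lexordp c d)}. sg c) =
         (\<Sum>c\<in>{c \<in> strs n. prefix (b @ [False]) c \<and> (c = d \<or> ord_class.lexordp c d)}. sg c)"
        using sumsplit[of "\<lambda>c. c = d \<or> ord_class.lexordp c d"] unfolding emp by simp
      thus ?thesis using IH[of False] d0 d(1) by simp
    next
      assume d1: "prefix (b @ [True]) d"
      have all: "{c \<in> strs n. prefix (b @ [False]) c \<and> (c = d \<or> ord_class.lexordp c d)} = {c \<in> strs n. prefix (b @ [False]) c}"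
      proof -
        { fix c assume c: "prefix (b @ [False]) c"
          obtain x where cx: "c = b @ False # x" using c(1) by (auto simp: prefix_def)
          obtain y where dy: "d = b @ True # y" using d1 by (auto simp: prefix_def)
          have "ord_class.lexordp c d" using cx dy lexordp_FT by simp }
        thus ?thesis by blast
      qed
      hence "(\<Sum>c\<in>{c \<in> strs n. prefix b c \<and> (c = d \<or> ord_class.lexordp c d)}. sg c) =
         sg (b @ [False]) + (\<Sum>c\<in>{c \<in> strs n. prefix (b @ [True]) c \<and> (c = d \<or> ord_class.lexordp c d)}. sg c)"
        using sumsplit[of "\<lambda>c. c = d \<or> ord_class.lexordp c d"] IH[of False] unfolding all by simp
      thus ?thesis using IH[of True] d1 d(1) unfolding sg_def by simp
    qed
  qed
  show ?case using t cm by blast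
qed

end

context S begin

lemma dom_opt: "dom (opt_gen n \<phi> F) = {u. \<exists>s\<in>strs n. opt_gen n \<phi> F u = Some s}"
  using opt_gen_range by (auto simp: dom_def)

lemma sum_all: "(\<Sum>s\<in>strs n. sg (psi s)) = 1"
proof -
  have bp: "bij_betw psi (strs n) (strs n)" using bij by (rule bij_betw_inv_into)
  have "(\<Sum>s\<in>strs n. sg (psi s)) = (\<Sum>c\<in>strs n. sg c)"
    by (rule sum.reindex_bij_betw[OF bp])
  also have "\<dots> = (\<Sum>c\<in>{c \<in> strs n. prefix [] c}. sg c)" by simp
  also have "\<dots> = 1" using tot_cum[of "[]"] sg_Nil by simp
  finally show ?thesis .
qed

lemma is_gen: "is_generator n (opt_gen n \<phi> F) (gen_dist (opt_gen n \<phi> F))"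
  unfolding is_generator_def
proof (intro conjI)
  show "\<forall>u\<in>dom (opt_gen n \<phi> F). \<forall>v\<in>dom (opt_gen n \<phi> F). prefix u v \<longrightarrow> u = v"
  proof (intro ballI impI)
    fix u v assume u: "u \<in> dom (opt_gen n \<phi> F)" and v: "v \<in> dom (opt_gen n \<phi> F)" and p: "prefix u v"
    obtain s where s: "opt n \<phi> F [] 0 0 1 u = Some (s, [])" using u opt_gen_iff by auto
    obtain s' where s': "opt n \<phi> F [] 0 0 1 v = Some (s', [])" using v opt_gen_iff by auto
    obtain t where t: "v = u @ t" using p by (auto simp: prefix_def)
    have "opt n \<phi> F [] 0 0 1 v = Some (s, t)" using opt_frame[of "[]" 0 0 1 u s "[]" t] s t by simp
    thus "u = v" using s' t by simp
  qed
  show "ran (opt_gen n \<phi> F) \<subseteq> strs n" using opt_gen_range by (auto simp: ran_def)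
  show "(\<Sum>\<^sub>\<infinity>u\<in>dom (opt_gen n \<phi> F). ennreal ((1 / 2) ^ length u)) = 1"
    unfolding dom_opt opt_subset_sum[OF order_refl] sum_all by simp
  show "\<forall>s. gen_dist (opt_gen n \<phi> F) s = gen_dist (opt_gen n \<phi> F) s" by simp
qed

lemma cdf: "x \<in> strs n \<Longrightarrow>
  (\<Sum>\<^sub>\<infinity>u\<in>{u. \<exists>s. opt_gen n \<phi> F u = Some s \<and> B_le n \<phi> s x}. ennreal ((1/2) ^ length u)) = ennreal (F x)"
proof -
  assume x: "x \<in> strs n"
  define SS where "SS = {s \<in> strs n. B_le n \<phi> s x}"
  define C where "C = {c \<in> strs n. prefix [] c \<and> (c = psi x \<or> ord_class.lexordp c (psi x))}"
  have px: "psi x \<in> strs n" "\<phi> (psi x) = x" using psi_strs[OF x] by auto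
  have e1: "{u. \<exists>s. opt_gen n \<phi> F u = Some s \<and> B_le n \<phi> s x} = {u. \<exists>s\<in>SS. opt_gen n \<phi> F u = Some s}"
    unfolding SS_def using opt_gen_range by auto
  have SSC: "SS = \<phi> ` C"
  proof
    show "SS \<subseteq> \<phi> ` C"
    proof
      fix s assume "s \<in> SS"
      hence s: "s \<in> strs n" "s = x \<or> ord_class.lexordp (psi s) (psi x)" unfolding SS_def B_le_def B_less_def by auto
      have "psi s \<in> C" using s psi_strs[OF s(1)] px unfolding C_def by auto
      thus "s \<in> \<phi> ` C" using psi_strs[OF s(1)] by (metis image_eqI)
    qed
  next
    show "\<phi> ` C \<subseteq> SS"
    proof
      fix s assume "s \<in> \<phi> ` C"
      then obtain c where c: "c \<in> C" "s = \<phi> c" by auto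
      hence cs: "c \<in> strs n" "c = psi x \<or> ord_class.lexordp c (psi x)" unfolding C_def by auto
      show "s \<in> SS" using c(2) cs phi_strs[OF cs(1)] psi_phi[OF cs(1)] px
        unfolding SS_def B_le_def B_less_def by auto
    qed
  qed
  have injC: "inj_on \<phi> C" using inj_phi unfolding C_def by (auto simp: inj_on_def)
  have "(\<Sum>s\<in>SS. sg (psi s)) = (\<Sum>c\<in>C. sg (psi (\<phi> c)))" unfolding SSC using sum.reindex[OF injC, of "\<lambda>s. sg (psi s)"] by (simp add: comp_def)
  also have "\<dots> = (\<Sum>c\<in>C. sg c)" by (rule sum.cong) (auto simp: C_def psi_phi)
  also have "\<dots> = F x" unfolding C_def using tot_cum[of "[]"] px by simp
  finally have "(\<Sum>s\<in>SS. sg (psi s)) = F x" .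
  moreover have "SS \<subseteq> strs n" unfolding SS_def by auto
  ultimately show ?thesis unfolding e1 using opt_subset_sum by simp
qed

lemma optimal: "is_generator n Y (gen_dist (opt_gen n \<phi> F)) \<Longrightarrow> entropy_cost (opt_gen n \<phi> F) \<le> entropy_cost Y"
proof -
  assume Y: "is_generator n Y (gen_dist (opt_gen n \<phi> F))"
  have ranY: "ran Y \<subseteq> strs n" and gd: "\<And>s. gen_dist Y s = gen_dist (opt_gen n \<phi> F) s"
    using Y unfolding is_generator_def by auto
  have domY: "dom Y = {u. \<exists>s\<in>strs n. Y u = Some s}" using ranY by (auto simp: dom_def ran_def)
  let ?g = "\<lambda>j. ennreal (real j * (1/2)^j)"
  have eY: "entropy_cost Y = (\<Sum>s\<in>strs n. \<Sum>j. of_nat (card {u. Y u = Some s \<and> length u = j}) * ?g j)"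
    unfolding entropy_cost_def domY by (rule infsum_gen[OF finite_strs])
  have eO: "entropy_cost (opt_gen n \<phi> F) = (\<Sum>s\<in>strs n. \<Sum>j. of_nat (card {u. opt_gen n \<phi> F u = Some s \<and> length u = j}) * ?g j)"
    unfolding entropy_cost_def dom_opt by (rule infsum_gen[OF finite_strs])
  show ?thesis unfolding eY eO
  proof (rule sum_mono)
    fix s assume s: "s \<in> strs n"
    have co: "card {u. opt_gen n \<phi> F u = Some s \<and> length u = j} = of_bool (bdig (sg (psi s)) j)" for j
      using root_count[of "psi s" j] psi_strs[OF s] by simp
    have "(\<Sum>j. of_nat (card {u. Y u = Some s \<and> length u = j}) * ennreal ((1/2)^j)) = gen_dist Y s"
    proof -
      have "gen_dist Y s = (\<Sum>j. of_nat (card {u \<in> {u. Y u = Some s}. length u = j}) * ennreal ((1/2)^j))"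
        unfolding gen_dist_def by (rule infsum_len)
      thus ?thesis by simp
    qed
    also have "\<dots> = ennreal (sg (psi s))" using gd[of s] gen_dist_opt[of s] s by simp
    finally have hc: "(\<Sum>j. of_nat (card {u. Y u = Some s \<and> length u = j}) * ennreal ((1/2)^j)) = ennreal (sg (psi s))" .
    show "(\<Sum>j. of_nat (card {u. opt_gen n \<phi> F u = Some s \<and> length u = j}) * ?g j) \<le>
          (\<Sum>j. of_nat (card {u. Y u = Some s \<and> length u = j}) * ?g j)"
      unfolding co using cost_cmp[OF _ _ hc] sg_rng[of "psi s"] psi_strs[OF s] by simp
  qed
qed

end

theorem theorem5p17:
  fixes n E m :: nat
    and \<gamma> :: "bool list \<Rightarrow> xreal"
    and \<phi> :: "bool list \<Rightarrow> bool list"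
    and F :: "bool list \<Rightarrow> real"
  assumes "binary_number_format n \<gamma> \<phi>"
    and "fp_cdf E m n \<phi> F"
  shows "is_generator n (opt_gen n \<phi> F) (gen_dist (opt_gen n \<phi> F))
    \<and> (\<forall>x\<in>strs n.
         (\<Sum>\<^sub>\<infinity> u \<in> {u. \<exists>s. opt_gen n \<phi> F u = Some s \<and> B_le n \<phi> s x}.
            ennreal ((1/2) ^ length u)) = ennreal (F x))
    \<and> (\<forall>Y. is_generator n Y (gen_dist (opt_gen n \<phi> F)) \<longrightarrow>
           entropy_cost (opt_gen n \<phi> F) \<le> entropy_cost Y)"
proof -
  have bij: "bij_betw \<phi> (strs n) (strs n)" using assms(1) unfolding binary_number_format_def by auto
  have inj: "inj_on \<phi> (strs n)" using bij bij_betw_def by blast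
  have rng: "\<And>b. b \<in> strs n \<Longrightarrow> 0 \<le> F b \<and> F b \<le> 1" using assms(2) unfolding fp_cdf_def by auto
  have top: "F (\<phi> (replicate n True)) = 1" using assms(2) unfolding fp_cdf_def by auto
  have mono: "F (\<phi> c) \<le> F (\<phi> c')" if "c \<in> strs n" "c' \<in> strs n" "ord_class.lexordp c c'" for c c'
  proof -
    have "\<phi> c \<in> strs n" "\<phi> c' \<in> strs n" using bij that bij_betw_apply by metis+
    moreover have "B_less n \<phi> (\<phi> c) (\<phi> c')" unfolding B_less_def using inj that by (simp add: inv_into_f_f)
    ultimately show ?thesis using assms(2) unfolding fp_cdf_def by blast
  qed
  interpret S n \<phi> F by (unfold_locales) (use bij rng top mono in auto)
  show ?thesis using is_gen cdf optimal by blast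
qed

end
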